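(* The maximum matching size problem (on incremental graph streams) admits an extendable bitwise AND gadget with $v(d)=O(d^2)$ and $t(d)=O(d^2)$.
   Context: Let $\zeta\in\mathbb N$ be a fixed constant and $m=\zeta d$. An extendable bitwise AND gadget for a graph function $g$ (here $g(G)$ = maximum number of pairwise vertex-disjoint edges of $G$, a real-valued function) consists of positive increasing functions $v,t:\mathbb N\to\mathbb N$ and, for each $d$: an initial graph $H_{\mathrm{init}}=(V,E_0)$ with $|V|=v(d)$; edges $e_1,\dots,e_d\in\binom V2$, defining $H^1_x=H_{\mathrm{init}}\cup\{e_i: x_i=1\}$ for $x\in\{0,1\}^d$; and for every sequence of queries $q^1,\dots,q^m\in\{0,1\}^d$, edge sets $S^1,T^1,\dots,S^m,T^m$ and functions $\mathrm{dec}_j:\mathrm{Range}(g)\to\mathbb R$ (depending on the queries but not on $x$) such that: (a) each $\mathrm{dec}_j$ is $1$-Lipschitz; (b) with $Q^j_x=H^j_x\cup S^j$, $\mathrm{dec}_j(g(Q^j_x))-\mathrm{dec}_j(g(H^j_x))=\langle x,q^j\rangle$ for all $x$; (c) $H^{j+1}_x=Q^j_x\cup T^j$; and the total number of edge insertions $|E_0|+d+\sum_j(|S^j|+|T^j|)$ is at most $t(d)$. For real-valued $g$ one may take $\mathrm{dec}_j=\mathrm{id}$. *)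

theory Defs
  imports Main "HOL-Library.Landau_Symbols"
begin

definition edges2 :: "nat \<Rightarrow> nat set set" where
  "edges2 n = {e. e \<subseteq> {..<n} \<and> card e = 2}"

text \<open>g(G): maximum number of pairwise vertex-disjoint edges (maximum matching size),
  as a real number.  Only used on finite edge sets.\<close>
definition max_matching :: "nat set set \<Rightarrow> real" where
  "max_matching E = real (Max (card ` {M. M \<subseteq> E \<and> finite M \<and> pairwise disjnt M}))"

text \<open>Inner product of x, q \<in> {0,1}^d, vectors represented by their first d entries.\<close>
definition inner01 :: "nat \<Rightarrow> (nat \<Rightarrow> bool) \<Rightarrow> (nat \<Rightarrow> bool) \<Rightarrow> nat" where
  "inner01 d x q = card {i. i < d \<and> x i \<and> q i}"

text \<open>Graphs H^{j+1}_x (0-based index j): H 0 x = H_init \<union> {e_i : x_i = 1},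
  H (j+1) x = Q^j_x \<union> T^j = H j x \<union> S^j \<union> T^j.\<close>
fun Hgr :: "nat set set \<Rightarrow> (nat \<Rightarrow> nat set) \<Rightarrow> nat \<Rightarrow> (nat \<Rightarrow> nat set set)
             \<Rightarrow> (nat \<Rightarrow> nat set set) \<Rightarrow> nat \<Rightarrow> (nat \<Rightarrow> bool) \<Rightarrow> nat set set" where
  "Hgr E0 e d S T 0 x = E0 \<union> {e i | i. i < d \<and> x i}"
| "Hgr E0 e d S T (Suc j) x = Hgr E0 e d S T j x \<union> S j \<union> T j"

definition Qgr :: "nat set set \<Rightarrow> (nat \<Rightarrow> nat set) \<Rightarrow> nat \<Rightarrow> (nat \<Rightarrow> nat set set)
             \<Rightarrow> (nat \<Rightarrow> nat set set) \<Rightarrow> nat \<Rightarrow> (nat \<Rightarrow> bool) \<Rightarrow> nat set set" where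
  "Qgr E0 e d S T j x = Hgr E0 e d S T j x \<union> S j"

text \<open>Queries q^1..q^m (m = \<zeta> d) are given as qs j (j < m), each a vector in {0,1}^d.
  dec_j is required to be 1-Lipschitz on Range(g) \<subseteq> \<nat>.\<close>
definition ext_AND_gadget ::
  "nat \<Rightarrow> (nat set set \<Rightarrow> real) \<Rightarrow> (nat \<Rightarrow> nat) \<Rightarrow> (nat \<Rightarrow> nat) \<Rightarrow> bool" where
  "ext_AND_gadget \<zeta> g v t \<longleftrightarrow>
     (\<forall>d::nat. \<exists>E0 e.
        E0 \<subseteq> edges2 (v d) \<and> (\<forall>i<d. e i \<in> edges2 (v d)) \<and>
        (\<forall>qs :: nat \<Rightarrow> nat \<Rightarrow> bool. \<exists>S T (dec :: nat \<Rightarrow> real \<Rightarrow> real).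
           (\<forall>j < \<zeta> * d. S j \<subseteq> edges2 (v d) \<and> T j \<subseteq> edges2 (v d)) \<and>
           (\<forall>j < \<zeta> * d. \<forall>a b :: nat. \<bar>dec j (real a) - dec j (real b)\<bar> \<le> \<bar>real a - real b\<bar>) \<and>
           (\<forall>j < \<zeta> * d. \<forall>x :: nat \<Rightarrow> bool.
              dec j (g (Qgr E0 e d S T j x)) - dec j (g (Hgr E0 e d S T j x))
                = real (inner01 d x (qs j))) \<and>
           card E0 + d + (\<Sum>j < \<zeta> * d. card (S j) + card (T j)) \<le> t d))"

end

theory Submission
  imports Defs "HOL-Library.Nat_Bijection"
begin

definition vtx :: "nat \<Rightarrow> nat \<Rightarrow> nat \<Rightarrow> nat" where
  "vtx r i k = 4 * prod_encode (i, k) + r"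

lemma vtx_eq [simp]:
  assumes "r < 4" "r' < 4"
  shows "vtx r i k = vtx r' i' k' \<longleftrightarrow> r = r' \<and> i = i' \<and> k = k'"
proof -
  have "4 * p + r = 4 * p' + r' \<longleftrightarrow> p = p' \<and> r = r'" for p p' :: nat
    using assms by presburger
  then show ?thesis unfolding vtx_def by auto
qed

lemma vtx_bound:
  assumes "r < 4" "i < d" "k \<le> z * d"
  shows "vtx r i k < 4 * (z+1)^2 * (d+1)^2"
proof -
  define n where "n = i + k"
  have t: "triangle n \<le> n * n + n" unfolding triangle_def by simp
  have pe: "prod_encode (i,k) \<le> (n+1)^2"
    unfolding prod_encode_def n_def[symmetric] using t by (simp add: n_def power2_eq_square)
  have "n + 1 \<le> (z+1) * d" using assms unfolding n_def by (simp add: algebra_simps)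
  then have "(n+1)^2 \<le> ((z+1)*d)^2" by (rule power_mono) simp
  also have "((z+1)*d)^2 = (z+1)^2 * d^2" by (rule power_mult_distrib)
  finally have A: "prod_encode (i,k) \<le> (z+1)^2 * d^2" using pe by linarith
  have B: "(z+1)^2 * d^2 + 1 \<le> (z+1)^2 * (d+1)^2"
  proof -
    have "d^2 + 1 \<le> (d+1)^2" by (simp add: power2_eq_square)
    then have "(z+1)^2 * (d^2 + 1) \<le> (z+1)^2 * (d+1)^2" by (rule mult_left_mono) simp
    moreover have "1 \<le> (z+1)^2" by simp
    ultimately show ?thesis by (simp only: distrib_left mult_1_right)
  qed
  show ?thesis unfolding vtx_def using A B assms(1) by linarith
qed


lemma mm_eq:
  fixes E M :: "nat set set" and C :: "nat set"
  assumes fE: "finite E" and ME: "M \<subseteq> E" and Md: "pairwise disjnt M" and fC: "finite C"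
    and cov: "\<forall>e\<in>E. e \<inter> C \<noteq> {}" and sur: "\<forall>c\<in>C. \<exists>e\<in>M. c \<in> e"
    and uniq: "\<forall>e\<in>M. \<forall>c1\<in>e \<inter> C. \<forall>c2\<in>e \<inter> C. c1 = c2"
  shows "max_matching E = real (card C)"
proof -
  have ub: "card M' \<le> card C" if M'E: "M' \<subseteq> E" and M'd: "pairwise disjnt M'" for M'
  proof -
    define \<phi> where "\<phi> e = (SOME c. c \<in> e \<inter> C)" for e :: "nat set"
    have ph: "\<phi> e \<in> e \<inter> C" if "e \<in> M'" for e
    proof -
      have "\<exists>c. c \<in> e \<inter> C" using cov that M'E by blast
      then show ?thesis unfolding \<phi>_def by (rule someI_ex)
    qed
    have "inj_on \<phi> M'"
    proof (rule inj_onI)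
      fix e1 e2 assume a: "e1 \<in> M'" "e2 \<in> M'" "\<phi> e1 = \<phi> e2"
      show "e1 = e2"
      proof (rule ccontr)
        assume "e1 \<noteq> e2"
        then have "disjnt e1 e2" using M'd a(1,2) unfolding pairwise_def by blast
        moreover have "\<phi> e1 \<in> e1" "\<phi> e1 \<in> e2" using ph[OF a(1)] ph[OF a(2)] a(3) by auto
        ultimately show False unfolding disjnt_def by blast
      qed
    qed
    moreover have "\<phi> ` M' \<subseteq> C" using ph by blast
    ultimately show ?thesis by (rule card_inj_on_le[OF _ _ fC])
  qed
  have fin: "finite M" using fE ME by (rule finite_subset[rotated])
  have lb: "card C \<le> card M"
  proof -
    define \<psi> where "\<psi> c = (SOME e. e \<in> M \<and> c \<in> e)" for c
    have ps: "\<psi> c \<in> M \<and> c \<in> \<psi> c" if "c \<in> C" for c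
    proof -
      have "\<exists>e. e \<in> M \<and> c \<in> e" using sur that by blast
      then show ?thesis unfolding \<psi>_def by (rule someI_ex)
    qed
    have "inj_on \<psi> C"
    proof (rule inj_onI)
      fix c1 c2 assume a: "c1 \<in> C" "c2 \<in> C" "\<psi> c1 = \<psi> c2"
      have "\<psi> c1 \<in> M" "c1 \<in> \<psi> c1 \<inter> C" "c2 \<in> \<psi> c1 \<inter> C" using ps[OF a(1)] ps[OF a(2)] a by auto
      then show "c1 = c2" using uniq by blast
    qed
    moreover have "\<psi> ` C \<subseteq> M" using ps by blast
    ultimately show ?thesis by (rule card_inj_on_le[OF _ _ fin])
  qed
  have eq: "card M = card C" using ub[OF ME Md] lb by simp
  let ?A = "card ` {M. M \<subseteq> E \<and> finite M \<and> pairwise disjnt M}"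
  have bnd: "y \<le> card C" if "y \<in> ?A" for y
  proof -
    from that obtain M' where "M' \<subseteq> E" "pairwise disjnt M'" "y = card M'" by blast
    then show ?thesis using ub by blast
  qed
  have "Max ?A = card C"
  proof (rule Max_eqI)
    show "finite ?A"
      by (rule finite_subset[of _ "{..card C}"]) (use bnd in blast, simp)
    show "y \<le> card C" if "y \<in> ?A" for y using bnd that .
    have "M \<in> {M. M \<subseteq> E \<and> finite M \<and> pairwise disjnt M}" using ME Md fin by blast
    then show "card C \<in> ?A" unfolding eq[symmetric] by (rule imageI)
  qed
  then show ?thesis unfolding max_matching_def by simp
qed
definition G :: "nat \<Rightarrow> nat \<Rightarrow> (nat \<Rightarrow> bool) \<Rightarrow> (nat \<Rightarrow> bool) \<Rightarrow> nat set set" where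
  "G d m f x = {{vtx 0 i 0, vtx 1 i 0} | i. i < d \<and> x i}
     \<union> {{vtx 0 i 0, vtx 2 i k} | i k. i < d \<and> k \<le> m}
     \<union> {{vtx 2 i k, vtx 3 i k} | i k. i < d \<and> k < m}
     \<union> {{vtx 2 i m, vtx 3 i m} | i. i < d \<and> f i}"

definition Cv :: "nat \<Rightarrow> nat \<Rightarrow> (nat \<Rightarrow> bool) \<Rightarrow> (nat \<Rightarrow> bool) \<Rightarrow> nat set" where
  "Cv d m f x = {vtx 2 i k | i k. i < d \<and> k < m}
     \<union> {vtx 2 i m | i. i < d \<and> f i}
     \<union> {vtx 0 i 0 | i. i < d \<and> (\<not> f i \<or> x i)}"

definition Mt :: "nat \<Rightarrow> nat \<Rightarrow> (nat \<Rightarrow> bool) \<Rightarrow> (nat \<Rightarrow> bool) \<Rightarrow> nat set set" where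
  "Mt d m f x = {{vtx 2 i k, vtx 3 i k} | i k. i < d \<and> k < m}
     \<union> {{vtx 2 i m, vtx 3 i m} | i. i < d \<and> f i}
     \<union> {{vtx 0 i 0, vtx 2 i m} | i. i < d \<and> \<not> f i}
     \<union> {{vtx 0 i 0, vtx 1 i 0} | i. i < d \<and> f i \<and> x i}"

lemma G_finite: "finite (G d m f x)"
  unfolding G_def by (intro finite_UnI finite_image_set2 finite_image_set) auto

lemma Cv_finite: "finite (Cv d m f x)"
  unfolding Cv_def by (intro finite_UnI finite_image_set2 finite_image_set) auto

lemma G_B: "i < d \<Longrightarrow> k \<le> m \<Longrightarrow> {vtx 0 i 0, vtx 2 i k} \<in> G d m f x"
  unfolding G_def by blast
lemma G_C: "i < d \<Longrightarrow> k < m \<Longrightarrow> {vtx 2 i k, vtx 3 i k} \<in> G d m f x"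
  unfolding G_def by blast
lemma G_D: "i < d \<Longrightarrow> f i \<Longrightarrow> {vtx 2 i m, vtx 3 i m} \<in> G d m f x"
  unfolding G_def by blast
lemma G_A: "i < d \<Longrightarrow> x i \<Longrightarrow> {vtx 0 i 0, vtx 1 i 0} \<in> G d m f x"
  unfolding G_def by blast


lemma Mt_cases:
  assumes "e \<in> Mt d m f x"
  obtains (A) i k where "i < d" "k < m" "e = {vtx 2 i k, vtx 3 i k}"
    | (B) i where "i < d" "f i" "e = {vtx 2 i m, vtx 3 i m}"
    | (C) i where "i < d" "\<not> f i" "e = {vtx 0 i 0, vtx 2 i m}"
    | (D) i where "i < d" "f i" "x i" "e = {vtx 0 i 0, vtx 1 i 0}"
  using assms unfolding Mt_def by blast

lemma G_cases:
  assumes "e \<in> G d m f x"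
  obtains (A) i where "i < d" "x i" "e = {vtx 0 i 0, vtx 1 i 0}"
    | (B) i k where "i < d" "k \<le> m" "e = {vtx 0 i 0, vtx 2 i k}"
    | (C) i k where "i < d" "k < m" "e = {vtx 2 i k, vtx 3 i k}"
    | (D) i where "i < d" "f i" "e = {vtx 2 i m, vtx 3 i m}"
  using assms unfolding G_def by blast

lemma Cv_mem:
  assumes "r < 4"
  shows "vtx r i k \<in> Cv d m f x \<longleftrightarrow>
    (r = 2 \<and> i < d \<and> (k < m \<or> (k = m \<and> f i))) \<or> (r = 0 \<and> k = 0 \<and> i < d \<and> (\<not> f i \<or> x i))"
  using assms unfolding Cv_def by auto

lemma vtx_mod: "r < 4 \<Longrightarrow> vtx r i k mod 4 = r" unfolding vtx_def by simp
lemma vtx_div: "r < 4 \<Longrightarrow> vtx r i k div 4 = prod_encode (i,k)" unfolding vtx_def by simp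

definition own :: "nat \<Rightarrow> (nat \<Rightarrow> bool) \<Rightarrow> nat \<Rightarrow> nat set" where
  "own m f c = (let r = c mod 4; (i,k) = prod_decode (c div 4) in
     if r = 0 then (if f i then {vtx 0 i 0, vtx 1 i 0} else {vtx 0 i 0, vtx 2 i m})
     else if r = 1 then {vtx 0 i 0, vtx 1 i 0}
     else if k < m \<or> f i then {vtx 2 i k, vtx 3 i k} else {vtx 0 i 0, vtx 2 i m})"

lemma own_vtx: "r < 4 \<Longrightarrow> own m f (vtx r i k) =
     (if r = 0 then (if f i then {vtx 0 i 0, vtx 1 i 0} else {vtx 0 i 0, vtx 2 i m})
     else if r = 1 then {vtx 0 i 0, vtx 1 i 0}
     else if k < m \<or> f i then {vtx 2 i k, vtx 3 i k} else {vtx 0 i 0, vtx 2 i m})"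
  unfolding own_def by (simp add: vtx_mod vtx_div Let_def)

lemma own_Mt: "e \<in> Mt d m f x \<Longrightarrow> c \<in> e \<Longrightarrow> own m f c = e"
proof (induct rule: Mt_cases)
  case (A i k) then show ?case by (auto simp: own_vtx)
next
  case (B i) then show ?case by (auto simp: own_vtx)
next
  case (C i) then show ?case by (auto simp: own_vtx)
next
  case (D i) then show ?case by (auto simp: own_vtx)
qed

lemma Mt_sub: "Mt d m f x \<subseteq> G d m f x"
proof
  fix e assume "e \<in> Mt d m f x"
  then show "e \<in> G d m f x"
  proof (cases rule: Mt_cases)
    case (A i k) then show ?thesis using G_C by blast
  next
    case (B i) then show ?thesis using G_D by blast
  next
    case (C i) then show ?thesis using G_B[of i d m m] by blast
  next
    case (D i) then show ?thesis using G_A by blast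
  qed
qed

lemma Mt_disj: "pairwise disjnt (Mt d m f x)"
  unfolding pairwise_def disjnt_def
proof (intro ballI impI)
  fix e1 e2 assume "e1 \<in> Mt d m f x" "e2 \<in> Mt d m f x" "e1 \<noteq> e2"
  then show "e1 \<inter> e2 = {}" using own_Mt[of e1] own_Mt[of e2] by blast
qed

lemma cov: "\<forall>e\<in>G d m f x. e \<inter> Cv d m f x \<noteq> {}"
proof
  fix e assume "e \<in> G d m f x"
  then show "e \<inter> Cv d m f x \<noteq> {}"
  proof (cases rule: G_cases)
    case (A i) then show ?thesis by (auto simp: Cv_mem)
  next
    case (B i k) then show ?thesis by (cases "k < m"; cases "f i") (auto simp: Cv_mem)
  next
    case (C i k) then show ?thesis by (auto simp: Cv_mem)
  next
    case (D i) then show ?thesis by (auto simp: Cv_mem)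
  qed
qed

lemma Mt_A: "i < d \<Longrightarrow> k < m \<Longrightarrow> {vtx 2 i k, vtx 3 i k} \<in> Mt d m f x"
  unfolding Mt_def by blast
lemma Mt_B: "i < d \<Longrightarrow> f i \<Longrightarrow> {vtx 2 i m, vtx 3 i m} \<in> Mt d m f x"
  unfolding Mt_def by blast
lemma Mt_C: "i < d \<Longrightarrow> \<not> f i \<Longrightarrow> {vtx 0 i 0, vtx 2 i m} \<in> Mt d m f x"
  unfolding Mt_def by blast
lemma Mt_D: "i < d \<Longrightarrow> f i \<Longrightarrow> x i \<Longrightarrow> {vtx 0 i 0, vtx 1 i 0} \<in> Mt d m f x"
  unfolding Mt_def by blast

lemma sur: "\<forall>c\<in>Cv d m f x. \<exists>e\<in>Mt d m f x. c \<in> e"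
proof
  fix c assume "c \<in> Cv d m f x"
  then consider (A) i k where "i < d" "k < m" "c = vtx 2 i k"
    | (B) i where "i < d" "f i" "c = vtx 2 i m"
    | (C) i where "i < d" "\<not> f i \<or> x i" "c = vtx 0 i 0"
    unfolding Cv_def by blast
  then show "\<exists>e\<in>Mt d m f x. c \<in> e"
  proof cases
    case (A i k) then show ?thesis using Mt_A[of i d k m f x] by blast
  next
    case (B i) then show ?thesis using Mt_B[of i d f m x] by blast
  next
    case (C i) then show ?thesis using Mt_C[of i d f m x] Mt_D[of i d f x m] by (cases "f i") blast+
  qed
qed

lemma uniq: "\<forall>e\<in>Mt d m f x. \<forall>c1\<in>e \<inter> Cv d m f x. \<forall>c2\<in>e \<inter> Cv d m f x. c1 = c2"
proof (intro ballI)
  fix e c1 c2 assume "e \<in> Mt d m f x" "c1 \<in> e \<inter> Cv d m f x" "c2 \<in> e \<inter> Cv d m f x"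
  then show "c1 = c2"
  proof (induct rule: Mt_cases)
    case (A i k) then show ?case by (auto simp: Cv_mem)
  next
    case (B i) then show ?case by (auto simp: Cv_mem)
  next
    case (C i) then show ?case by (auto simp: Cv_mem)
  next
    case (D i) then show ?case by (auto simp: Cv_mem)
  qed
qed

lemma mm_G: "max_matching (G d m f x) = real (card (Cv d m f x))"
  by (rule mm_eq[OF G_finite Mt_sub Mt_disj Cv_finite cov sur uniq])


lemma card_Cv: "card (Cv d m f x) = d * m + card {i. i < d \<and> f i} + card {i. i < d \<and> (\<not> f i \<or> x i)}"
proof -
  define P1 where "P1 = {vtx 2 i k | i k. i < d \<and> k < m}"
  define P2 where "P2 = {vtx 2 i m | i. i < d \<and> f i}"
  define P3 where "P3 = {vtx 0 i 0 | i. i < d \<and> (\<not> f i \<or> x i)}"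
  have e1: "P1 = (\<lambda>(i,k). vtx 2 i k) ` ({..<d} \<times> {..<m})" unfolding P1_def by auto
  have i1: "inj_on (\<lambda>(i,k). vtx 2 i k) ({..<d} \<times> {..<m})" by (auto intro!: inj_onI)
  have c1: "card P1 = d * m" unfolding e1 using card_image[OF i1] by (simp add: card_cartesian_product)
  have e2: "P2 = (\<lambda>i. vtx 2 i m) ` {i. i < d \<and> f i}" unfolding P2_def by auto
  have c2: "card P2 = card {i. i < d \<and> f i}" unfolding e2 by (rule card_image) (auto intro!: inj_onI)
  have e3: "P3 = (\<lambda>i. vtx 0 i 0) ` {i. i < d \<and> (\<not> f i \<or> x i)}" unfolding P3_def by auto
  have c3: "card P3 = card {i. i < d \<and> (\<not> f i \<or> x i)}" unfolding e3 by (rule card_image) (auto intro!: inj_onI)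
  have f1: "finite P1" unfolding e1 by simp
  have f2: "finite P2" unfolding e2 by simp
  have f3: "finite P3" unfolding e3 by simp
  have d12: "P1 \<inter> P2 = {}" unfolding P1_def P2_def by auto
  have d3: "(P1 \<union> P2) \<inter> P3 = {}" unfolding P1_def P2_def P3_def by auto
  have "Cv d m f x = P1 \<union> P2 \<union> P3" unfolding Cv_def P1_def P2_def P3_def by blast
  then have "card (Cv d m f x) = card (P1 \<union> P2) + card P3"
    using card_Un_disjoint[OF _ f3 d3] f1 f2 by simp
  also have "card (P1 \<union> P2) = card P1 + card P2" by (rule card_Un_disjoint[OF f1 f2 d12])
  finally show ?thesis using c1 c2 c3 by simp
qed

lemma count_aux:
  "card {i. i < d \<and> q i} + card {i. i < d \<and> (\<not> q i \<or> x i)} = d + card {i. i < d \<and> x i \<and> q i}"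
proof -
  have "{i. i < d \<and> (\<not> q i \<or> x i)} = {i. i < d \<and> \<not> q i} \<union> {i. i < d \<and> x i \<and> q i}" by auto
  then have a: "card {i. i < d \<and> (\<not> q i \<or> x i)} = card {i. i < d \<and> \<not> q i} + card {i. i < d \<and> x i \<and> q i}"
    by (simp add: card_Un_disjoint disjoint_iff)
  have "{..<d} = {i. i < d \<and> q i} \<union> {i. i < d \<and> \<not> q i}" by auto
  then have "d = card {i. i < d \<and> q i} + card {i. i < d \<and> \<not> q i}"
    by (metis (no_types, lifting) card_Un_disjoint card_lessThan disjoint_iff finite_Un finite_lessThan mem_Collect_eq)
  then show ?thesis using a by simp
qed

lemma mm_diff: "max_matching (G d m q x) - max_matching (G d m (\<lambda>_. False) x) = real (inner01 d x q)"
proof -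
  have "card (Cv d m q x) = card (Cv d m (\<lambda>_. False) x) + inner01 d x q"
    unfolding card_Cv inner01_def using count_aux[of d q x] by simp
  then show ?thesis unfolding mm_G by simp
qed


definition E0g :: "nat \<Rightarrow> nat set set" where "E0g d = {{vtx 0 i 0, vtx 2 i 0} | i. i < d}"
definition eg :: "nat \<Rightarrow> nat set" where "eg i = {vtx 0 i 0, vtx 1 i 0}"
definition SSg :: "nat \<Rightarrow> (nat \<Rightarrow> nat \<Rightarrow> bool) \<Rightarrow> nat \<Rightarrow> nat set set" where
  "SSg d qs j = {{vtx 2 i j, vtx 3 i j} | i. i < d \<and> qs j i}"
definition TTg :: "nat \<Rightarrow> nat \<Rightarrow> nat set set" where
  "TTg d j = {{vtx 2 i j, vtx 3 i j} | i. i < d} \<union> {{vtx 0 i 0, vtx 2 i (Suc j)} | i. i < d}"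

lemma Hgr_eq: "Hgr (E0g d) eg d (SSg d qs) (TTg d) j x = G d j (\<lambda>_. False) x"
proof (induct j)
  case 0
  show ?case
  proof (rule set_eqI, rule iffI)
    fix e assume "e \<in> Hgr (E0g d) eg d (SSg d qs) (TTg d) 0 x"
    then consider (a) i where "i < d" "e = {vtx 0 i 0, vtx 2 i 0}" | (b) i where "i < d" "x i" "e = eg i"
      unfolding E0g_def by auto
    then show "e \<in> G d 0 (\<lambda>_. False) x"
    proof cases
      case (a i) then show ?thesis using G_B[of i d 0 0] by simp
    next
      case (b i) then show ?thesis using G_A unfolding eg_def by blast
    qed
  next
    fix e assume "e \<in> G d 0 (\<lambda>_. False) x"
    then show "e \<in> Hgr (E0g d) eg d (SSg d qs) (TTg d) 0 x"
    proof (cases rule: G_cases)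
      case (A i) then show ?thesis unfolding eg_def by auto
    next
      case (B i k) then show ?thesis unfolding E0g_def by auto
    next
      case (C i k) then show ?thesis by simp
    next
      case (D i) then show ?thesis by simp
    qed
  qed
next
  case (Suc j)
  have "Hgr (E0g d) eg d (SSg d qs) (TTg d) (Suc j) x = G d j (\<lambda>_. False) x \<union> SSg d qs j \<union> TTg d j"
    using Suc by simp
  also have "\<dots> = G d (Suc j) (\<lambda>_. False) x"
  proof (rule set_eqI, rule iffI)
    fix e assume "e \<in> G d j (\<lambda>_. False) x \<union> SSg d qs j \<union> TTg d j"
    then consider (g) "e \<in> G d j (\<lambda>_. False) x" | (s) i where "i < d" "e = {vtx 2 i j, vtx 3 i j}"
      | (t) i where "i < d" "e = {vtx 0 i 0, vtx 2 i (Suc j)}"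
      unfolding SSg_def TTg_def by blast
    then show "e \<in> G d (Suc j) (\<lambda>_. False) x"
    proof cases
      case g then show ?thesis
      proof (cases rule: G_cases)
        case (A i) then show ?thesis using G_A by blast
      next
        case (B i k) then show ?thesis using G_B[of i d k "Suc j"] by simp
      next
        case (C i k) then show ?thesis using G_C[of i d k "Suc j"] by simp
      next
        case (D i) then show ?thesis by simp
      qed
    next
      case (s i) then show ?thesis using G_C[of i d j "Suc j"] by simp
    next
      case (t i) then show ?thesis using G_B[of i d "Suc j" "Suc j"] by simp
    qed
  next
    fix e assume "e \<in> G d (Suc j) (\<lambda>_. False) x"
    then show "e \<in> G d j (\<lambda>_. False) x \<union> SSg d qs j \<union> TTg d j"
    proof (cases rule: G_cases)
      case (A i) then show ?thesis using G_A by blast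
    next
      case (B i k)
      show ?thesis
      proof (cases "k \<le> j")
        case True then show ?thesis using B G_B[of i d k j] by blast
      next
        case False then have "k = Suc j" using B by simp
        then show ?thesis using B unfolding TTg_def by blast
      qed
    next
      case (C i k)
      show ?thesis
      proof (cases "k < j")
        case True then show ?thesis using C G_C[of i d k j] by blast
      next
        case False then have "k = j" using C by simp
        then show ?thesis using C unfolding TTg_def by blast
      qed
    next
      case (D i) then show ?thesis by simp
    qed
  qed
  finally show ?case .
qed

lemma Qgr_eq: "Qgr (E0g d) eg d (SSg d qs) (TTg d) j x = G d j (qs j) x"
proof -
  have "Qgr (E0g d) eg d (SSg d qs) (TTg d) j x = G d j (\<lambda>_. False) x \<union> SSg d qs j"
    unfolding Qgr_def Hgr_eq ..
  also have "\<dots> = G d j (qs j) x"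
  proof (rule set_eqI, rule iffI)
    fix e assume "e \<in> G d j (\<lambda>_. False) x \<union> SSg d qs j"
    then consider (g) "e \<in> G d j (\<lambda>_. False) x" | (s) i where "i < d" "qs j i" "e = {vtx 2 i j, vtx 3 i j}"
      unfolding SSg_def by blast
    then show "e \<in> G d j (qs j) x"
    proof cases
      case g then show ?thesis
      proof (cases rule: G_cases)
        case (A i) then show ?thesis using G_A by blast
      next
        case (B i k) then show ?thesis using G_B by blast
      next
        case (C i k) then show ?thesis using G_C by blast
      next
        case (D i) then show ?thesis by simp
      qed
    next
      case (s i) then show ?thesis using G_D[of i d "qs j"] by blast
    qed
  next
    fix e assume "e \<in> G d j (qs j) x"
    then show "e \<in> G d j (\<lambda>_. False) x \<union> SSg d qs j"
    proof (cases rule: G_cases)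
      case (A i) then show ?thesis using G_A by blast
    next
      case (B i k) then show ?thesis using G_B by blast
    next
      case (C i k) then show ?thesis using G_C by blast
    next
      case (D i) then show ?thesis unfolding SSg_def by blast
    qed
  qed
  finally show ?thesis .
qed


lemma edge2:
  assumes "r < 4" "r' < 4" "r \<noteq> r'" "i < d" "k \<le> z * d" "k' \<le> z * d"
  shows "{vtx r i k, vtx r' i k'} \<in> edges2 (4 * (z+1)^2 * (d+1)^2)"
  unfolding edges2_def using vtx_bound[OF assms(1,4,5)] vtx_bound[OF assms(2,4,6)] assms(1-3)
  by auto

lemma card_compr_le1: "card {f i | i. i < d \<and> P i} \<le> d"
proof -
  have "card {f i | i. i < d \<and> P i} = card (f ` {i. i < d \<and> P i})" by (simp add: setcompr_eq_image)
  also have "\<dots> \<le> card {i. i < d \<and> P i}" by (rule card_image_le) simp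
  also have "\<dots> \<le> card {..<d}" by (rule card_mono) auto
  finally show ?thesis by simp
qed

lemma card_compr_le2: "card {f i | i. i < d} \<le> d"
  using card_compr_le1[of f d "\<lambda>_. True"] by simp

lemma bigO_aux: "(\<lambda>d. real (c * (d+1)^2)) \<in> O(\<lambda>d. real d ^ 2)"
proof (rule bigoI[where c = "4 * real c"])
  show "\<forall>\<^sub>F d in at_top. norm (real (c * (d+1)^2)) \<le> 4 * real c * norm (real d ^ 2)"
    unfolding eventually_at_top_linorder
  proof (intro exI[of _ 1] allI impI)
    fix d :: nat assume "1 \<le> d"
    then have "(d+1)^2 \<le> (2*d)^2" by (intro power_mono) auto
    then have "c * (d+1)^2 \<le> c * (4 * d^2)" by (simp add: power_mult_distrib)
    then have "real (c * (d+1)^2) \<le> real (c * (4 * d^2))" by (rule of_nat_mono)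
    then show "norm (real (c * (d+1)^2)) \<le> 4 * real c * norm (real d ^ 2)" by simp
  qed
qed

lemma smono_aux: "c > 0 \<Longrightarrow> strict_mono (\<lambda>d::nat. c * (d+1)^2)"
  unfolding strict_mono_Suc_iff
proof
  fix n :: nat assume "c > 0"
  have "(n+1)^2 < (Suc n + 1)^2" by (rule power_strict_mono) auto
  then show "c * (n+1)^2 < c * (Suc n + 1)^2" using \<open>c > 0\<close> by simp
qed

lemma arith_aux: "(d::nat) + d + z * d * (3 * d) \<le> (3 * z + 2) * (d + 1)^2"
  by (simp add: power2_eq_square algebra_simps)

theorem mainTheorem3:
  fixes \<zeta> :: nat
  shows "\<exists>v t :: nat \<Rightarrow> nat.
           (\<forall>d. v d > 0) \<and> (\<forall>d. t d > 0) \<and> strict_mono v \<and> strict_mono t \<and>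
           (\<lambda>d. real (v d)) \<in> O(\<lambda>d. real d ^ 2) \<and>
           (\<lambda>d. real (t d)) \<in> O(\<lambda>d. real d ^ 2) \<and>
           ext_AND_gadget \<zeta> max_matching v t"
proof (intro exI conjI)
  let ?v = "\<lambda>d::nat. 4 * (\<zeta>+1)^2 * (d+1)^2"
  let ?t = "\<lambda>d::nat. (3 * \<zeta> + 2) * (d+1)^2"
  show "\<forall>d. ?v d > 0" by simp
  show "\<forall>d. ?t d > 0" by simp
  show "strict_mono ?v" by (rule smono_aux) simp
  show "strict_mono ?t" by (rule smono_aux) simp
  show "(\<lambda>d. real (?v d)) \<in> O(\<lambda>d. real d ^ 2)" by (rule bigO_aux)
  show "(\<lambda>d. real (?t d)) \<in> O(\<lambda>d. real d ^ 2)" by (rule bigO_aux)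
  show "ext_AND_gadget \<zeta> max_matching ?v ?t"
    unfolding ext_AND_gadget_def
  proof (intro allI)
    fix d :: nat
    show "\<exists>E0 e. E0 \<subseteq> edges2 (?v d) \<and> (\<forall>i<d. e i \<in> edges2 (?v d)) \<and>
        (\<forall>qs :: nat \<Rightarrow> nat \<Rightarrow> bool. \<exists>S T (dec :: nat \<Rightarrow> real \<Rightarrow> real).
           (\<forall>j < \<zeta> * d. S j \<subseteq> edges2 (?v d) \<and> T j \<subseteq> edges2 (?v d)) \<and>
           (\<forall>j < \<zeta> * d. \<forall>a b :: nat. \<bar>dec j (real a) - dec j (real b)\<bar> \<le> \<bar>real a - real b\<bar>) \<and>
           (\<forall>j < \<zeta> * d. \<forall>x :: nat \<Rightarrow> bool.
              dec j (max_matching (Qgr E0 e d S T j x)) - dec j (max_matching (Hgr E0 e d S T j x))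
                = real (inner01 d x (qs j))) \<and>
           card E0 + d + (\<Sum>j < \<zeta> * d. card (S j) + card (T j)) \<le> ?t d)"
    proof (intro exI conjI allI impI)
      show "E0g d \<subseteq> edges2 (?v d)" unfolding E0g_def using edge2[of 0 2 _ d 0 \<zeta> 0] by auto
      show "eg i \<in> edges2 (?v d)" if "i < d" for i unfolding eg_def using edge2[of 0 1 i d 0 \<zeta> 0] that by auto
      fix qs :: "nat \<Rightarrow> nat \<Rightarrow> bool"
      show "SSg d qs j \<subseteq> edges2 (?v d)" if "j < \<zeta> * d" for j
        unfolding SSg_def using edge2[of 2 3 _ d j \<zeta> j] that by auto
      show "TTg d j \<subseteq> edges2 (?v d)" if "j < \<zeta> * d" for j
        unfolding TTg_def using edge2[of 2 3 _ d j \<zeta> j] edge2[of 0 2 _ d 0 \<zeta> "Suc j"] that by auto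
      show "\<bar>(\<lambda>j y. y) j (real a) - (\<lambda>j y. y) j (real b)\<bar> \<le> \<bar>real a - real b\<bar>" for j a b by simp
      show "(\<lambda>j y. y) j (max_matching (Qgr (E0g d) eg d (SSg d qs) (TTg d) j x)) -
            (\<lambda>j y. y) j (max_matching (Hgr (E0g d) eg d (SSg d qs) (TTg d) j x)) = real (inner01 d x (qs j))"
        for j x unfolding Qgr_eq Hgr_eq using mm_diff by simp
      have cE: "card (E0g d) \<le> d" unfolding E0g_def by (rule card_compr_le2)
      have cST: "card (SSg d qs j) + card (TTg d j) \<le> 3 * d" for j
      proof -
        have "card (SSg d qs j) \<le> d" unfolding SSg_def by (rule card_compr_le1)
        moreover have "card (TTg d j) \<le> d + d" unfolding TTg_def
          using card_Un_le[of "{{vtx 2 i j, vtx 3 i j} | i. i < d}" "{{vtx 0 i 0, vtx 2 i (Suc j)} | i. i < d}"]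
            card_compr_le2[of "\<lambda>i. {vtx 2 i j, vtx 3 i j}" d] card_compr_le2[of "\<lambda>i. {vtx 0 i 0, vtx 2 i (Suc j)}" d]
          by linarith
        ultimately show ?thesis by linarith
      qed
      have "(\<Sum>j < \<zeta> * d. card (SSg d qs j) + card (TTg d j)) \<le> (\<Sum>j < \<zeta> * d. 3 * d)"
        by (rule sum_mono) (rule cST)
      also have "\<dots> = \<zeta> * d * (3 * d)" by simp
      finally show "card (E0g d) + d + (\<Sum>j < \<zeta> * d. card (SSg d qs j) + card (TTg d j)) \<le> ?t d"
        using cE arith_aux[of d \<zeta>] by linarith
    qed
  qed
qed

end
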